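(* For $X_d=\otimes_{j=1}^d X_{1,j}$, the following are equivalent: (i) $\sup_{d\in\mathbb N}n^{X_d}(\varepsilon)<\infty$ for every $\varepsilon\in(0,1)$; (ii) $\displaystyle\sum_{j=1}^\infty\sum_{k=2}^\infty\frac{\lambda^{X_{1,j}}_k}{\lambda^{X_{1,j}}_1}<\infty$.
   Context: For a centered Hilbert-space random element $Z$ with finite second moment, $\lambda^Z_1\ge\lambda^Z_2\ge\dots\ge 0$ denote the eigenvalues of its covariance operator $K^Z$ listed with multiplicity (padded with zeros if there are finitely many), $\Lambda^Z=\sum_k\lambda^Z_k$, $\bar\lambda^Z_k=\lambda^Z_k/\Lambda^Z$. Let $H_{1,j}$, $j\in\mathbb N$, be separable Hilbert spaces and $X_{1,j}$ centered $H_{1,j}$-valued random elements with $\mathbb E\|X_{1,j}\|^2<\infty$ and $\lambda^{X_{1,j}}_1>0$. $X_d=\otimes_{j=1}^dX_{1,j}$ means: $X_d$ is a centered random element of the Hilbert tensor product $H_d=\otimes_{j=1}^dH_{1,j}$ with covariance operator $K^{X_d}=\otimes_{j=1}^dK^{X_{1,j}}$; so the eigenvalues of $K^{X_d}$ are the products $\prod_{j=1}^d\lambda^{X_{1,j}}_{k_j}$, $(k_1,\dots,k_d)\in\mathbb N^d$, and $\Lambda^{X_d}=\prod_j\Lambda^{X_{1,j}}$. The average case approximation complexity is $n^{X_d}(\varepsilon)=\min\{n\in\mathbb N: e^{X_d}(n)\le\varepsilon e^{X_d}(0)\}$, where $e^{X_d}(0)=(\mathbb E\|X_d\|^2)^{1/2}$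 and $e^{X_d}(n)$ is the infimum of $(\mathbb E\|X_d-\sum_{m=1}^n l_m(X_d)\psi_m\|^2)^{1/2}$ over $\psi_m\in H_d$, $l_m\in H_d^*$; equivalently $n^{X_d}(\varepsilon)=\min\{n:\sum_{k>n}\bar\lambda^{X_d}_k\le\varepsilon^2\}$. *)

theory Defs
  imports "HOL-Analysis.Analysis"
begin

text \<open>Eigenvalues of a covariance operator "listed with multiplicity, padded with zeros":
  given a nonnegative family f on an index set I (the eigenvalues, indexed arbitrarily),
  mu is its nonincreasing rearrangement (0-based: mu k is the (k+1)-st largest eigenvalue),
  i.e. mu is nonnegative, nonincreasing, and every positive value c occurs in mu exactly
  as often as in f (equipotent level sets).\<close>
definition listed_with_mult :: "('i \<Rightarrow> real) \<Rightarrow> 'i set \<Rightarrow> (nat \<Rightarrow> real) \<Rightarrow> bool" where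
  "listed_with_mult f I mu \<longleftrightarrow>
     (\<forall>k. 0 \<le> mu k) \<and> (\<forall>k. mu (Suc k) \<le> mu k) \<and>
     (\<forall>c>0. \<exists>g. bij_betw g {k. mu k = c} {i\<in>I. f i = c})"

definition eig_seq :: "('i \<Rightarrow> real) \<Rightarrow> 'i set \<Rightarrow> nat \<Rightarrow> real" where
  "eig_seq f I = (SOME mu. listed_with_mult f I mu)"

text \<open>Average case approximation complexity via the eigenvalue formula
  n(eps) = min { n : sum_{k>n} lambda_bar_k \<le> eps^2 }, lambda_bar_k = lambda_k / Lambda.\<close>
definition avg_complexity :: "('i \<Rightarrow> real) \<Rightarrow> 'i set \<Rightarrow> real \<Rightarrow> nat" where
  "avg_complexity f I eps =
     (LEAST n::nat. (\<Sum>k. eig_seq f I (n + k) / (\<Sum>m. eig_seq f I m)) \<le> eps\<^sup>2)"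

text \<open>Multi-indices (k_1,...,k_d) in N^d (1-based), and the eigenvalues of the tensor
  product covariance operator: products prod_j lambda_{j,k_j}.\<close>
definition multi_idx :: "nat \<Rightarrow> (nat \<Rightarrow> nat) set" where
  "multi_idx d = PiE {1..d} (\<lambda>_. {1..})"

definition tensor_eig :: "(nat \<Rightarrow> nat \<Rightarrow> real) \<Rightarrow> nat \<Rightarrow> (nat \<Rightarrow> nat) \<Rightarrow> real" where
  "tensor_eig lam d ks = (\<Prod>j\<in>{1..d}. lam j (ks j))"

end

theory Submission
  imports Defs
begin


lemma summable_prod_PiE_nonneg:
  fixes f :: "'a \<Rightarrow> 'b \<Rightarrow> real"
  assumes fin: "finite A" and nn: "\<And>x y. x \<in> A \<Longrightarrow> y \<in> B x \<Longrightarrow> 0 \<le> f x y"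
    and sm: "\<And>x. x \<in> A \<Longrightarrow> f x summable_on B x"
  shows "(\<lambda>g. \<Prod>x\<in>A. f x (g x)) summable_on PiE A B"
proof (rule nonneg_bdd_above_summable_on)
  show "0 \<le> (\<Prod>x\<in>A. f x (g x))" if "g \<in> PiE A B" for g
    using that nn by (auto intro!: prod_nonneg)
  show "bdd_above (sum (\<lambda>g. \<Prod>x\<in>A. f x (g x)) ` {F. F \<subseteq> PiE A B \<and> finite F})"
  proof (rule bdd_aboveI, clarsimp)
    fix P assume P: "P \<subseteq> PiE A B" "finite P"
    define B' where "B' x = (\<lambda>p. p x) ` P" for x
    have finB': "finite (B' x)" for x using P by (simp add: B'_def)
    have PB': "P \<subseteq> PiE A B'"
      using P by (auto simp: B'_def PiE_def Pi_def extensional_def)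
    have B'B: "B' x \<subseteq> B x" if "x \<in> A" for x
      using P that by (auto simp: B'_def PiE_def Pi_def)
    have "(\<Sum>g\<in>P. \<Prod>x\<in>A. f x (g x)) \<le> (\<Sum>g\<in>PiE A B'. \<Prod>x\<in>A. f x (g x))"
      apply (rule sum_mono2)
      using fin finB' PB' apply (auto intro!: finite_PiE)
      using B'B nn by (force intro!: prod_nonneg simp: PiE_def Pi_def)
    also have "\<dots> = (\<Prod>x\<in>A. \<Sum>y\<in>B' x. f x y)"
      by (rule prod_sum_PiE[symmetric]) (use fin finB' in auto)
    also have "\<dots> \<le> (\<Prod>x\<in>A. infsum (f x) (B x))"
      apply (rule prod_mono)
      using B'B nn sm finB' by (auto intro!: sum_nonneg finite_sum_le_infsum)
    finally show "(\<Sum>g\<in>P. \<Prod>x\<in>A. f x (g x)) \<le> (\<Prod>x\<in>A. infsum (f x) (B x))" .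
  qed
qed

lemma has_sum_prod_PiE_nonneg:
  fixes f :: "'a \<Rightarrow> 'b \<Rightarrow> real"
  assumes fin: "finite A" and nn: "\<And>x y. x \<in> A \<Longrightarrow> y \<in> B x \<Longrightarrow> 0 \<le> f x y"
    and sm: "\<And>x. x \<in> A \<Longrightarrow> f x summable_on B x"
  shows "((\<lambda>g. \<Prod>x\<in>A. f x (g x)) has_sum (\<Prod>x\<in>A. infsum (f x) (B x))) (PiE A B)"
proof -
  have s: "(\<lambda>g. \<Prod>x\<in>A. f x (g x)) summable_on PiE A B"
    by (rule summable_prod_PiE_nonneg[OF assms])
  have "infsum (\<lambda>g. \<Prod>x\<in>A. f x (g x)) (PiE A B) = (\<Prod>x\<in>A. infsum (f x) (B x))"
    by (rule infsum_prod_PiE[OF fin sm s])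
  with s show ?thesis by (metis has_sum_infsum)
qed

lemma finite_level:
  fixes f :: "'i \<Rightarrow> real"
  assumes nn: "\<And>i. i \<in> I \<Longrightarrow> 0 \<le> f i" and sm: "f summable_on I" and c: "0 < c"
  shows "finite {i\<in>I. c \<le> f i}"
proof (rule ccontr)
  assume inf: "infinite {i\<in>I. c \<le> f i}"
  obtain n :: nat where n: "infsum f I / c < n" using reals_Archimedean2 by blast
  obtain F where F: "F \<subseteq> {i\<in>I. c \<le> f i}" "finite F" "card F = n"
    using infinite_arbitrarily_large[OF inf] by blast
  have "n * c = (\<Sum>i\<in>F. c)" using F by simp
  also have "\<dots> \<le> sum f F" using F by (intro sum_mono) auto
  also have "\<dots> \<le> infsum f I" using F nn sm by (intro finite_sum_le_infsum) auto
  finally have "n * c \<le> infsum f I" .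
  with n c show False by (simp add: field_simps)
qed

lemma le_infsum_single:
  fixes f :: "'i \<Rightarrow> real"
  assumes nn: "\<And>i. i \<in> I \<Longrightarrow> 0 \<le> f i" and sm: "f summable_on I" and i: "i \<in> I"
  shows "f i \<le> infsum f I"
  using finite_sum_le_infsum[OF sm, of "{i}"] nn i by auto




lemma exists_listed:
  fixes f :: "'i \<Rightarrow> real"
  assumes nn: "\<And>i. i \<in> I \<Longrightarrow> 0 \<le> f i" and sm: "f summable_on I"
  shows "\<exists>mu. listed_with_mult f I mu"
proof -
  define N where "N c = card {i\<in>I. c \<le> f i}" for c
  define N' where "N' c = card {i\<in>I. c < f i}" for c
  define S where "S k = {c. 0 < c \<and> k < N c}" for k
  define mu where "mu k = (if S k = {} then 0 else Sup (S k))" for k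
  have fin: "finite {i\<in>I. c \<le> f i}" if "0 < c" for c
    using finite_level[OF nn sm that] .
  have fin': "finite {i\<in>I. c < f i}" if "0 < c" for c
    by (rule finite_subset[OF _ fin[OF that]]) auto
  have bdd: "bdd_above (S k)" for k
  proof (rule bdd_aboveI)
    fix c assume "c \<in> S k"
    then have "{i\<in>I. c \<le> f i} \<noteq> {}" unfolding S_def N_def by (metis (no_types, lifting) card.empty less_nat_zero_code mem_Collect_eq)
    then obtain i where "i \<in> I" "c \<le> f i" by auto
    then show "c \<le> infsum f I" using le_infsum_single[OF nn sm] by force
  qed
  have key: "c \<le> mu k \<longleftrightarrow> k < N c" if c: "0 < c" for c k
  proof
    assume "k < N c"
    then have "c \<in> S k" using c by (simp add: S_def)
    then show "c \<le> mu k" using bdd by (auto simp: mu_def intro: cSup_upper)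
  next
    assume cm: "c \<le> mu k"
    show "k < N c"
    proof (rule ccontr)
      assume Nk: "\<not> k < N c"
      have Sne: "S k \<noteq> {}" using cm c by (auto simp: mu_def split: if_splits)
      define G where "G = {i\<in>I. c/2 \<le> f i \<and> f i < c}"
      have finG: "finite G" unfolding G_def
        by (rule finite_subset[OF _ fin[of "c/2"]]) (use c in auto)
      define c'' where "c'' = Max (insert (c/2) (f ` G))"
      have c''lt: "c'' < c" unfolding c''_def using finG c
        by (subst Max_less_iff) (auto simp: G_def)
      have Gle: "f i \<le> c''" if "i \<in> G" for i
        unfolding c''_def using finG that by (intro Max_ge) auto
      have half: "c/2 \<le> c''" unfolding c''_def using finG by (intro Max_ge) auto
      have "x \<le> c''" if x: "x \<in> S k" for x
      proof (rule ccontr)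
        assume "\<not> x \<le> c''"
        then have xgt: "c'' < x" by simp
        have xpos: "0 < x" using x by (simp add: S_def)
        have "N x \<le> N c"
        proof (cases "c \<le> x")
          case True
          then show ?thesis unfolding N_def by (intro card_mono[OF fin[OF c]]) auto
        next
          case False
          have "{i\<in>I. x \<le> f i} = {i\<in>I. c \<le> f i}"
          proof (intro set_eqI iffI)
            fix i assume i: "i \<in> {i\<in>I. x \<le> f i}"
            show "i \<in> {i\<in>I. c \<le> f i}"
            proof (rule ccontr)
              assume "i \<notin> {i\<in>I. c \<le> f i}"
              then have "i \<in> G" using i half xgt by (auto simp: G_def)
              then show False using Gle i xgt by force
            qed
          next
            fix i assume "i \<in> {i\<in>I. c \<le> f i}"
            then show "i \<in> {i\<in>I. x \<le> f i}" using False by auto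
          qed
          then show ?thesis by (simp add: N_def)
        qed
        then show False using x Nk by (simp add: S_def)
      qed
      then have "mu k \<le> c''" using Sne by (auto simp: mu_def intro: cSup_least)
      then show False using cm c''lt by simp
    qed
  qed
  have mu_nn: "0 \<le> mu k" for k
  proof (cases "S k = {}")
    case False
    then obtain c where "c \<in> S k" by auto
    then have "0 < c" "c \<le> Sup (S k)" using bdd by (auto simp: S_def intro: cSup_upper)
    then show ?thesis using False by (simp add: mu_def)
  qed (simp add: mu_def)
  have mu_mono: "mu (Suc k) \<le> mu k" for k
  proof (rule ccontr)
    assume "\<not> mu (Suc k) \<le> mu k"
    then have lt: "mu k < mu (Suc k)" by simp
    then have p: "0 < mu (Suc k)" using mu_nn[of k] by simp
    then have "Suc k < N (mu (Suc k))" using key by blast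
    then have "k < N (mu (Suc k))" by simp
    then have "mu (Suc k) \<le> mu k" using key p by blast
    with lt show False by simp
  qed
  have key': "c < mu k \<longleftrightarrow> k < N' c" if c: "0 < c" for c k
  proof
    assume cm: "c < mu k"
    then have mp: "0 < mu k" using c by simp
    then have "k < N (mu k)" using key by blast
    also have "N (mu k) \<le> N' c" unfolding N_def N'_def
      by (rule card_mono[OF fin'[OF c]]) (use cm in auto)
    finally show "k < N' c" .
  next
    assume kN: "k < N' c"
    then have ne: "{i\<in>I. c < f i} \<noteq> {}" unfolding N'_def by (metis card.empty less_nat_zero_code)
    define m where "m = Min (f ` {i\<in>I. c < f i})"
    have mgt: "c < m" unfolding m_def using fin'[OF c] ne by (subst Min_gr_iff) auto
    have "{i\<in>I. m \<le> f i} = {i\<in>I. c < f i}"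
      using mgt fin'[OF c] by (auto simp: m_def)
    then have "N m = N' c" by (simp add: N_def N'_def)
    then have "m \<le> mu k" using key[of m k] mgt c kN by simp
    then show "c < mu k" using mgt by simp
  qed
  have lev: "\<exists>g. bij_betw g {k. mu k = c} {i\<in>I. f i = c}" if c: "0 < c" for c
  proof -
    have "{k. mu k = c} = {k. c \<le> mu k} - {k. c < mu k}" by auto
    also have "\<dots> = {N' c..<N c}" using key[OF c] key'[OF c] by auto
    finally have e1: "{k. mu k = c} = {N' c..<N c}" .
    have sub: "{i\<in>I. c < f i} \<subseteq> {i\<in>I. c \<le> f i}" by auto
    have e2: "{i\<in>I. f i = c} = {i\<in>I. c \<le> f i} - {i\<in>I. c < f i}" by auto
    have "card {i\<in>I. f i = c} = N c - N' c"
      unfolding e2 N_def N'_def by (rule card_Diff_subset[OF fin'[OF c] sub])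
    then have "card {k. mu k = c} = card {i\<in>I. f i = c}" by (simp add: e1)
    moreover have "finite {i\<in>I. f i = c}" using e2 fin[OF c] by simp
    ultimately show ?thesis using e1 by (metis finite_atLeastLessThan finite_same_card_bij)
  qed
  show ?thesis
    unfolding listed_with_mult_def using mu_nn mu_mono lev by blast
qed




lemma listed_bij:
  assumes L: "listed_with_mult f I mu"
  shows "\<exists>h. bij_betw h {k. 0 < mu k} {i\<in>I. 0 < f i} \<and> (\<forall>k. 0 < mu k \<longrightarrow> f (h k) = mu k)"
proof -
  have lev: "\<forall>c>0. \<exists>g. bij_betw g {k. mu k = c} {i\<in>I. f i = c}"
    using L by (simp add: listed_with_mult_def)
  define G where "G c = (SOME g. bij_betw g {k. mu k = c} {i\<in>I. f i = c})" for c
  have G: "bij_betw (G c) {k. mu k = c} {i\<in>I. f i = c}" if "0 < c" for c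
    unfolding G_def using lev that by (metis (mono_tags, lifting) someI_ex)
  define h where "h k = G (mu k) k" for k
  have fh: "f (h k) = mu k" "h k \<in> I" if "0 < mu k" for k
    using G[OF that] unfolding h_def bij_betw_def by auto
  have inj: "inj_on h {k. 0 < mu k}"
  proof (rule inj_onI)
    fix a b assume a: "a \<in> {k. 0 < mu k}" and b: "b \<in> {k. 0 < mu k}" and e: "h a = h b"
    then have "mu a = mu b" using fh by (metis mem_Collect_eq)
    then have "G (mu a) a = G (mu a) b" using e by (simp add: h_def)
    moreover have "inj_on (G (mu a)) {k. mu k = mu a}" using G a by (auto simp: bij_betw_def)
    ultimately show "a = b" using \<open>mu a = mu b\<close> by (auto dest: inj_onD)
  qed
  have img: "h ` {k. 0 < mu k} = {i\<in>I. 0 < f i}"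
  proof
    show "h ` {k. 0 < mu k} \<subseteq> {i\<in>I. 0 < f i}" using fh by auto
  next
    show "{i\<in>I. 0 < f i} \<subseteq> h ` {k. 0 < mu k}"
    proof
      fix i assume i: "i \<in> {i\<in>I. 0 < f i}"
      then have "i \<in> G (f i) ` {k. mu k = f i}" using G[of "f i"] by (auto simp: bij_betw_def)
      then obtain k where "mu k = f i" "i = G (f i) k" by auto
      then have "h k = i" "0 < mu k" using i by (auto simp: h_def)
      then show "i \<in> h ` {k. 0 < mu k}" by force
    qed
  qed
  show ?thesis using inj img fh by (auto simp: bij_betw_def)
qed

lemma sum_antimono_card:
  fixes mu :: "nat \<Rightarrow> real"
  assumes mono: "\<And>k. mu (Suc k) \<le> mu k"
  shows "finite G \<Longrightarrow> sum mu G \<le> sum mu {..<card G}"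
proof (induction "card G" arbitrary: G)
  case 0
  then show ?case by simp
next
  case (Suc n)
  then have ne: "G \<noteq> {}" by auto
  define m where "m = Max G"
  have mG: "m \<in> G" using Suc ne by (simp add: m_def)
  have cG: "card (G - {m}) = n" using Suc mG by simp
  have sub: "G - {m} \<subseteq> {..<m}"
  proof
    fix x assume x: "x \<in> G - {m}"
    then have "x \<le> m" using Suc.hyps(2) Suc.prems by (auto simp: m_def intro: Max_ge)
    then show "x \<in> {..<m}" using x by auto
  qed
  then have "n \<le> m" using cG by (metis card_lessThan card_mono finite_lessThan)
  have anti: "mu b \<le> mu a" if "a \<le> b" for a b
    using that by (induction b rule: dec_induct) (auto intro: order_trans[OF mono])
  have "sum mu G = mu m + sum mu (G - {m})" using Suc mG by (simp add: sum.remove)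
  also have "\<dots> \<le> mu n + sum mu {..<n}"
    using Suc.hyps(1)[of "G - {m}"] cG Suc.prems anti[OF \<open>n \<le> m\<close>] by simp
  also have "\<dots> = sum mu {..<card G}" using Suc.hyps(2) by (metis add.commute sum.lessThan_Suc)
  finally show ?case .
qed

locale listed_ctx =
  fixes f :: "'i \<Rightarrow> real" and I :: "'i set" and mu :: "nat \<Rightarrow> real"
  assumes nn: "\<And>i. i \<in> I \<Longrightarrow> 0 \<le> f i" and sm: "f summable_on I"
    and L: "listed_with_mult f I mu"
begin

lemma mu_nn: "0 \<le> mu k" and mu_mono: "mu (Suc k) \<le> mu k"
  using L by (auto simp: listed_with_mult_def)

lemma mu_has_sum: "(mu has_sum infsum f I) UNIV"
proof -
  obtain h where h: "bij_betw h {k. 0 < mu k} {i\<in>I. 0 < f i}" "\<And>k. 0 < mu k \<Longrightarrow> f (h k) = mu k"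
    using listed_bij[OF L] by blast
  have "(f has_sum infsum f I) I" using sm by (rule has_sum_infsum)
  then have "(f has_sum infsum f I) {i\<in>I. 0 < f i}"
    by (rule has_sum_cong_neutral[THEN iffD1, rotated -1]) (use nn in \<open>auto simp: less_le\<close>)
  then have "((\<lambda>k. f (h k)) has_sum infsum f I) {k. 0 < mu k}"
    using has_sum_reindex_bij_betw[OF h(1)] by blast
  then have "(mu has_sum infsum f I) {k. 0 < mu k}"
    by (rule has_sum_cong[THEN iffD1, rotated]) (use h(2) in auto)
  then show ?thesis
    by (rule has_sum_cong_neutral[THEN iffD1, rotated -1]) (use mu_nn in \<open>auto simp: less_le\<close>)
qed

lemma mu_sums: "mu sums infsum f I"
  using mu_has_sum by (rule has_sum_imp_sums)

lemma mu_le_bound: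
  assumes "\<And>i. i \<in> I \<Longrightarrow> f i \<le> B" "0 \<le> B"
  shows "mu k \<le> B"
proof (cases "0 < mu k")
  case True
  obtain h where h: "bij_betw h {k. 0 < mu k} {i\<in>I. 0 < f i}" "\<And>k. 0 < mu k \<Longrightarrow> f (h k) = mu k"
    using listed_bij[OF L] by blast
  have "h k \<in> I" using h(1) True by (auto simp: bij_betw_def)
  then show ?thesis using assms h(2)[OF True] by force
next
  case False then show ?thesis using assms by simp
qed

lemma partial_le_bound:
  assumes "\<And>i. i \<in> I \<Longrightarrow> f i \<le> B" "0 \<le> B"
  shows "sum mu {..<n} \<le> n * B"
proof -
  have "sum mu {..<n} \<le> (\<Sum>k<n. B)" by (rule sum_mono) (rule mu_le_bound[OF assms])
  then show ?thesis by simp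
qed

lemma finite_le_partial:
  assumes F: "finite F" "F \<subseteq> I" "card F \<le> n"
  shows "sum f F \<le> sum mu {..<n}"
proof -
  obtain h where h: "bij_betw h {k. 0 < mu k} {i\<in>I. 0 < f i}" "\<And>k. 0 < mu k \<Longrightarrow> f (h k) = mu k"
    using listed_bij[OF L] by blast
  define F' where "F' = {i\<in>F. 0 < f i}"
  define G where "G = {k. 0 < mu k \<and> h k \<in> F'}"
  have F'sub: "F' \<subseteq> {i\<in>I. 0 < f i}" using F by (auto simp: F'_def)
  have hG: "bij_betw h G F'"
  proof -
    have "inj_on h G" using h(1) by (auto simp: bij_betw_def G_def intro: inj_on_subset)
    moreover have "h ` G = F'"
    proof
      show "h ` G \<subseteq> F'" by (auto simp: G_def)
      show "F' \<subseteq> h ` G"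
      proof
        fix i assume i: "i \<in> F'"
        then have "i \<in> h ` {k. 0 < mu k}" using h(1) F'sub by (auto simp: bij_betw_def)
        then show "i \<in> h ` G" using i by (auto simp: G_def)
      qed
    qed
    ultimately show ?thesis by (simp add: bij_betw_def)
  qed
  have finF': "finite F'" using F by (simp add: F'_def)
  have finG: "finite G" using hG finF' bij_betw_finite by blast
  have "sum f F = sum f F'"
    unfolding F'_def using F nn by (intro sum.mono_neutral_right) (auto simp: less_le)
  also have "\<dots> = sum (\<lambda>k. f (h k)) G" by (rule sum.reindex_bij_betw[OF hG, symmetric])
  also have "\<dots> = sum mu G" using h(2) by (auto simp: G_def intro!: sum.cong)
  also have "\<dots> \<le> sum mu {..<card G}" by (rule sum_antimono_card[of mu, OF mu_mono finG])
  also have "\<dots> \<le> sum mu {..<n}"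
  proof -
    have "card G = card F'" using hG bij_betw_same_card by blast
    also have "\<dots> \<le> card F" using F by (intro card_mono) (auto simp: F'_def)
    finally have "card G \<le> n" using F by simp
    then show ?thesis using mu_nn by (intro sum_mono2) auto
  qed
  finally show ?thesis .
qed

lemma tail_eq:
  assumes T: "0 < infsum f I"
  shows "(\<Sum>k. mu (n + k) / (\<Sum>m. mu m)) \<le> e \<longleftrightarrow> (1 - e) * infsum f I \<le> sum mu {..<n}"
proof -
  have s: "summable mu" using mu_sums by (simp add: sums_iff)
  have sm: "(\<Sum>m. mu m) = infsum f I" using mu_sums by (simp add: sums_iff)
  have s2: "summable (\<lambda>k. mu (n + k))" using summable_ignore_initial_segment[OF s, of n]
    by (simp add: add.commute)
  have e1: "(\<Sum>k. mu (n + k) / (\<Sum>m. mu m)) = (\<Sum>k. mu (n + k)) / infsum f I"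
    using suminf_divide[OF s2] sm by simp
  have e2: "(\<Sum>k. mu (n + k)) = infsum f I - sum mu {..<n}"
    using suminf_minus_initial_segment[OF s, of n] sm by (simp add: add.commute)
  show ?thesis unfolding e1 e2 using T by (simp add: field_simps)
qed

end

lemma eig_seq_listed:
  fixes f :: "'i \<Rightarrow> real"
  assumes nn: "\<And>i. i \<in> I \<Longrightarrow> 0 \<le> f i" and sm: "f summable_on I"
  shows "listed_ctx f I (eig_seq f I)"
  unfolding listed_ctx_def eig_seq_def
  using nn sm someI_ex[OF exists_listed[OF nn sm]] by blast

lemma avg_le:
  fixes f :: "'i \<Rightarrow> real"
  assumes nn: "\<And>i. i \<in> I \<Longrightarrow> 0 \<le> f i" and sm: "f summable_on I" and T: "0 < infsum f I"
    and F: "finite F" "F \<subseteq> I" "card F \<le> n"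
    and big: "(1 - eps\<^sup>2) * infsum f I \<le> sum f F"
  shows "avg_complexity f I eps \<le> n"
proof -
  interpret listed_ctx f I "eig_seq f I" by (rule eig_seq_listed[OF nn sm])
  have "sum f F \<le> sum (eig_seq f I) {..<n}" by (rule finite_le_partial[OF F])
  then have "(\<Sum>k. eig_seq f I (n + k) / (\<Sum>m. eig_seq f I m)) \<le> eps\<^sup>2"
    using tail_eq[OF T] big by simp
  then show ?thesis unfolding avg_complexity_def by (rule Least_le)
qed

lemma avg_ge:
  fixes f :: "'i \<Rightarrow> real"
  assumes nn: "\<And>i. i \<in> I \<Longrightarrow> 0 \<le> f i" and sm: "f summable_on I" and T: "0 < infsum f I"
    and eps: "0 < eps" and M: "avg_complexity f I eps \<le> M"
    and B: "\<And>i. i \<in> I \<Longrightarrow> f i \<le> B" "0 \<le> B"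
  shows "(1 - eps\<^sup>2) * infsum f I \<le> M * B"
proof -
  interpret listed_ctx f I "eig_seq f I" by (rule eig_seq_listed[OF nn sm])
  let ?P = "\<lambda>n. (\<Sum>k. eig_seq f I (n + k) / (\<Sum>m. eig_seq f I m)) \<le> eps\<^sup>2"
  have ex: "\<exists>n. ?P n"
  proof -
    have lim: "(\<lambda>n. sum (eig_seq f I) {..<n}) \<longlonglongrightarrow> infsum f I"
      using mu_sums by (simp add: sums_def)
    have "(1 - eps\<^sup>2) * infsum f I < infsum f I" using eps T by simp
    then have "eventually (\<lambda>n. (1 - eps\<^sup>2) * infsum f I < sum (eig_seq f I) {..<n}) sequentially"
      using order_tendstoD(1)[OF lim] by blast
    then obtain n where "(1 - eps\<^sup>2) * infsum f I < sum (eig_seq f I) {..<n}"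
      by (auto simp: eventually_at_top_linorder)
    then show ?thesis using tail_eq[OF T] by (meson less_imp_le)
  qed
  define n where "n = avg_complexity f I eps"
  have "?P n" unfolding n_def avg_complexity_def by (rule LeastI_ex[OF ex])
  then have "(1 - eps\<^sup>2) * infsum f I \<le> sum (eig_seq f I) {..<n}" using tail_eq[OF T] by simp
  also have "\<dots> \<le> n * B" by (rule partial_le_bound[OF B])
  also have "\<dots> \<le> M * B" using M B(2) by (simp add: n_def mult_right_mono)
  finally show ?thesis .
qed




lemma prod_one_plus_ge:
  fixes x :: "'a \<Rightarrow> real"
  assumes "finite A" "\<And>j. j \<in> A \<Longrightarrow> 0 \<le> x j"
  shows "1 + sum x A \<le> (\<Prod>j\<in>A. 1 + x j)"
  using assms
proof (induction A rule: finite_induct)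
  case (insert a A)
  have xa: "0 \<le> x a" and h: "1 + sum x A \<le> (\<Prod>j\<in>A. 1 + x j)" using insert by auto
  have sA: "0 \<le> sum x A" using insert by (auto intro: sum_nonneg)
  have "1 + sum x (insert a A) = 1 + x a + sum x A" using insert by simp
  also have "\<dots> \<le> (1 + x a) * (1 + sum x A)" using xa sA by (simp add: algebra_simps)
  also have "\<dots> \<le> (1 + x a) * (\<Prod>j\<in>A. 1 + x j)" using h xa by (intro mult_left_mono) auto
  finally show ?case using insert by simp
qed simp

lemma prod_ge_one_minus:
  fixes r :: "'a \<Rightarrow> real"
  assumes "finite A" "\<And>j. j \<in> A \<Longrightarrow> 0 \<le> r j \<and> r j \<le> 1"
  shows "1 - (\<Sum>j\<in>A. 1 - r j) \<le> (\<Prod>j\<in>A. r j)"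
  using assms
proof (induction A rule: finite_induct)
  case (insert a A)
  have ra: "0 \<le> r a" "r a \<le> 1" and h: "1 - (\<Sum>j\<in>A. 1 - r j) \<le> (\<Prod>j\<in>A. r j)" using insert by auto
  have sA: "0 \<le> (\<Sum>j\<in>A. 1 - r j)" using insert by (auto intro: sum_nonneg)
  have "1 - (\<Sum>j\<in>insert a A. 1 - r j) = r a - (\<Sum>j\<in>A. 1 - r j)" using insert by simp
  also have "\<dots> \<le> r a * (1 - (\<Sum>j\<in>A. 1 - r j))" using ra sA by (simp add: algebra_simps mult_left_le_one_le)
  also have "\<dots> \<le> r a * (\<Prod>j\<in>A. r j)" using h ra by (intro mult_left_mono) auto
  finally show ?case using insert by simp
qed simp

lemma bij_Suc: "bij_betw Suc UNIV {1::nat..}"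
  unfolding bij_betw_def by (auto simp: image_iff) (metis Suc_le_D)

locale lam_ctx =
  fixes lam :: "nat \<Rightarrow> nat \<Rightarrow> real"
  assumes nonneg: "\<And>j k. 1 \<le> j \<Longrightarrow> 1 \<le> k \<Longrightarrow> 0 \<le> lam j k"
    and noninc: "\<And>j k. 1 \<le> j \<Longrightarrow> 1 \<le> k \<Longrightarrow> lam j (Suc k) \<le> lam j k"
    and trace: "\<And>j. 1 \<le> j \<Longrightarrow> summable (\<lambda>k. lam j (Suc k))"
    and pos: "\<And>j. 1 \<le> j \<Longrightarrow> 0 < lam j 1"
begin

definition "L j = (\<Sum>k. lam j (Suc k))"
definition "s j = (\<Sum>k. lam j (k + 2)) / lam j 1"

lemma lam_le1: assumes "1 \<le> j" "1 \<le> k" shows "lam j k \<le> lam j 1"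
  using assms(2)
proof (induction k rule: dec_induct)
  case (step n) then show ?case using noninc[of j n] assms(1) by simp
qed simp

lemma lam_sums: "1 \<le> j \<Longrightarrow> (\<lambda>k. lam j (Suc k)) sums L j"
  using trace by (simp add: L_def summable_sums)

lemma lam_has_sum: "1 \<le> j \<Longrightarrow> (lam j has_sum L j) {1..}"
proof -
  assume j: "1 \<le> j"
  have "((\<lambda>k. lam j (Suc k)) has_sum L j) UNIV"
    by (rule sums_nonneg_imp_has_sum[OF lam_sums[OF j]]) (use nonneg j in auto)
  then show ?thesis using has_sum_reindex_bij_betw[OF bij_Suc] by blast
qed

lemma L_eq: "1 \<le> j \<Longrightarrow> L j = lam j 1 * (1 + s j)"
proof -
  assume j: "1 \<le> j"
  have "(\<Sum>n. lam j (Suc (Suc n))) = L j - lam j 1"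
    using suminf_split_head[OF trace[OF j]] by (simp add: L_def)
  then show ?thesis using pos[OF j] by (simp add: s_def field_simps numeral_2_eq_2)
qed

lemma s_nn: "1 \<le> j \<Longrightarrow> 0 \<le> s j"
proof -
  assume j: "1 \<le> j"
  have "summable (\<lambda>k. lam j (k + 2))"
    using summable_ignore_initial_segment[OF trace[OF j], of 1] by (simp add: numeral_2_eq_2)
  then have "0 \<le> (\<Sum>k. lam j (k + 2))" by (rule suminf_nonneg) (use nonneg j in auto)
  then show ?thesis using pos[OF j] by (simp add: s_def)
qed

lemma L_pos: assumes "1 \<le> j" shows "lam j 1 \<le> L j" "0 < L j"
proof -
  have "0 \<le> lam j 1 * s j" using s_nn[OF assms] pos[OF assms] by simp
  then show "lam j 1 \<le> L j" "0 < L j" using L_eq[OF assms] pos[OF assms] by (auto simp: algebra_simps)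
qed

lemma stmt_eq: "(\<Sum>k. lam (Suc j) (k + 2) / lam (Suc j) 1) = s (Suc j)"
proof -
  have "summable (\<lambda>k. lam (Suc j) (k + 2))"
    using summable_ignore_initial_segment[OF trace[of "Suc j"], of 1] by (simp add: numeral_2_eq_2)
  then show ?thesis by (simp add: s_def suminf_divide)
qed

abbreviation "fd d \<equiv> tensor_eig lam d"
abbreviation "Ix d \<equiv> multi_idx d"

lemma fd_nn: "ks \<in> Ix d \<Longrightarrow> 0 \<le> fd d ks"
  unfolding tensor_eig_def multi_idx_def by (auto intro!: prod_nonneg nonneg simp: PiE_def Pi_def)

lemma fd_has_sum: "(fd d has_sum (\<Prod>j\<in>{1..d}. L j)) (Ix d)"
proof -
  have "((\<lambda>g. \<Prod>x\<in>{1..d}. lam x (g x)) has_sum (\<Prod>x\<in>{1..d}. infsum (lam x) {1..})) (PiE {1..d} (\<lambda>_. {1..}))"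
    by (rule has_sum_prod_PiE_nonneg) (use nonneg lam_has_sum in \<open>auto dest: has_sum_imp_summable\<close>)
  moreover have "(\<Prod>x\<in>{1..d}. infsum (lam x) {1..}) = (\<Prod>x\<in>{1..d}. L x)"
    by (rule prod.cong) (use lam_has_sum in \<open>auto dest: infsumI\<close>)
  ultimately show ?thesis unfolding tensor_eig_def multi_idx_def by simp
qed

lemma fd_sm: "fd d summable_on Ix d" and fd_infsum: "infsum (fd d) (Ix d) = (\<Prod>j\<in>{1..d}. L j)"
  using fd_has_sum by (auto dest: has_sum_imp_summable infsumI)

lemma Td_pos: "0 < infsum (fd d) (Ix d)"
  unfolding fd_infsum by (rule prod_pos) (use L_pos in auto)

lemma fd_le: assumes ks: "ks \<in> Ix d" shows "fd d ks \<le> (\<Prod>j\<in>{1..d}. lam j 1)"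
  unfolding tensor_eig_def
proof (rule prod_mono)
  fix i assume i: "i \<in> {1..d}"
  then have k: "1 \<le> ks i" using ks by (auto simp: multi_idx_def PiE_def Pi_def)
  show "0 \<le> lam i (ks i) \<and> lam i (ks i) \<le> lam i 1"
    using nonneg[of i "ks i"] lam_le1[of i "ks i"] i k by auto
qed

end




context lam_ctx begin

lemma dir1:
  assumes H: "\<forall>eps::real. 0 < eps \<and> eps < 1 \<longrightarrow> (\<exists>M::nat. \<forall>d\<ge>1. avg_complexity (fd d) (Ix d) eps \<le> M)"
  shows "summable (\<lambda>j. s (Suc j))"
proof -
  obtain M :: nat where M: "\<And>d. d \<ge> 1 \<Longrightarrow> avg_complexity (fd d) (Ix d) (1/2) \<le> M"
    using H[rule_format, of "1/2"] by auto
  have bnd: "(\<Sum>j<d. s (Suc j)) \<le> 4 * M / 3" for d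
  proof (cases "d = 0")
    case True then show ?thesis by simp
  next
    case False
    then have d: "d \<ge> 1" by simp
    define B where "B = (\<Prod>j\<in>{1..d}. lam j 1)"
    have Bpos: "0 < B" unfolding B_def by (rule prod_pos) (use pos in auto)
    have "(1 - (1/2)\<^sup>2) * infsum (fd d) (Ix d) \<le> M * B"
      by (rule avg_ge[OF fd_nn fd_sm Td_pos _ M[OF d]]) (use fd_le Bpos in \<open>auto simp: B_def\<close>)
    moreover have "infsum (fd d) (Ix d) = B * (\<Prod>j\<in>{1..d}. 1 + s j)"
      unfolding fd_infsum B_def prod.distrib[symmetric] by (rule prod.cong) (auto simp: L_eq)
    ultimately have "3/4 * (\<Prod>j\<in>{1..d}. 1 + s j) \<le> M" using Bpos
      by (simp add: power2_eq_square algebra_simps)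
    moreover have "1 + (\<Sum>j\<in>{1..d}. s j) \<le> (\<Prod>j\<in>{1..d}. 1 + s j)"
      by (rule prod_one_plus_ge) (use s_nn in auto)
    moreover have "(\<Sum>j\<in>{1..d}. s j) = (\<Sum>j<d. s (Suc j))"
      using sum.atLeast1_atMost_eq by simp
    ultimately show ?thesis by simp
  qed
  show ?thesis by (rule summableI_nonneg_bounded[OF _ bnd]) (use s_nn in auto)
qed

end




context lam_ctx begin

lemma dir2:
  assumes S: "summable (\<lambda>j. s (Suc j))" and eps: "0 < eps" "eps < 1"
  shows "\<exists>M::nat. \<forall>d\<ge>1. avg_complexity (fd d) (Ix d) eps \<le> M"
proof -
  define s' where "s' j = s (Suc j)" for j
  define \<delta> where "\<delta> = eps\<^sup>2"
  have dpos: "0 < \<delta>" using eps by (simp add: \<delta>_def)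
  have s'nn: "0 \<le> s' j" for j using s_nn by (simp add: s'_def)
  have S': "summable s'" using S unfolding s'_def by simp
  have "(\<lambda>n. \<Sum>j<n. s' j) \<longlonglongrightarrow> suminf s'" using S' by (simp add: summable_LIMSEQ)
  moreover have "suminf s' - \<delta>/2 < suminf s'" using dpos by simp
  ultimately have "eventually (\<lambda>n. suminf s' - \<delta>/2 < (\<Sum>j<n. s' j)) sequentially"
    by (rule order_tendstoD(1))
  then obtain J where "suminf s' - \<delta>/2 < (\<Sum>j<J. s' j)"
    by (auto simp: eventually_at_top_linorder)
  then have J: "suminf s' - (\<Sum>j<J. s' j) < \<delta>/2" by linarith
  define \<eta> where "\<eta> = \<delta> / (2 * (J + 1))"
  have etapos: "0 < \<eta>" using dpos by (simp add: \<eta>_def)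
  have ev: "eventually (\<lambda>K. L j - (\<Sum>k\<in>{1..K}. lam j k) < \<eta> * lam j 1) sequentially"
    if j: "j \<in> {1..J}" for j
  proof -
    have j1: "1 \<le> j" using j by simp
    have lim: "(\<lambda>K. \<Sum>k<K. lam j (Suc k)) \<longlonglongrightarrow> L j" using lam_sums[OF j1] by (simp add: sums_def)
    have "L j - \<eta> * lam j 1 < L j" using etapos pos[OF j1] by simp
    from order_tendstoD(1)[OF lim this]
    show ?thesis
      by eventually_elim (simp add: sum.atLeast1_atMost_eq)
  qed
  have "eventually (\<lambda>K. (\<forall>j\<in>{1..J}. L j - (\<Sum>k\<in>{1..K}. lam j k) < \<eta> * lam j 1) \<and> 1 \<le> K) sequentially"
    using eventually_ball_finite[OF finite_atLeastAtMost[of 1 J], of "\<lambda>K j. L j - (\<Sum>k\<in>{1..K}. lam j k) < \<eta> * lam j 1"] ev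
      eventually_ge_at_top[of 1]
    by (auto intro: eventually_conj)
  then obtain K :: nat where K: "\<And>j. j \<in> {1..J} \<Longrightarrow> L j - (\<Sum>k\<in>{1..K}. lam j k) < \<eta> * lam j 1" "1 \<le> K"
    unfolding eventually_at_top_linorder by (metis atLeastAtMost_iff order_refl)
  show ?thesis
  proof (intro exI allI impI)
    fix d :: nat assume d: "1 \<le> d"
    define Kj where "Kj j = (if j \<le> J then K else 1)" for j
    define F where "F = PiE {1..d} (\<lambda>j. {1..Kj j})"
    have finF: "finite F" unfolding F_def by (rule finite_PiE) auto
    have FI: "F \<subseteq> Ix d" unfolding F_def multi_idx_def by (rule PiE_mono) auto
    have cardF: "card F \<le> K ^ J"
    proof -
      have "card F = (\<Prod>j\<in>{1..d}. Kj j)" unfolding F_def by (simp add: card_PiE)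
      also have "\<dots> = (\<Prod>j\<in>{1..min d J}. Kj j)"
        by (rule prod.mono_neutral_right) (auto simp: Kj_def)
      also have "\<dots> = (\<Prod>j\<in>{1..min d J}. K)"
        by (rule prod.cong) (auto simp: Kj_def)
      also have "\<dots> = K ^ min d J" by simp
      also have "\<dots> \<le> K ^ J" using K(2) by (intro power_increasing) auto
      finally show ?thesis .
    qed
    define a where "a j = (\<Sum>k\<in>{1..Kj j}. lam j k)" for j
    define r where "r j = a j / L j" for j
    have a_eq: "a j = (\<Sum>k<Kj j. lam j (Suc k))" for j
      by (simp add: a_def sum.atLeast1_atMost_eq)
    have a_nn: "0 \<le> a j" if "1 \<le> j" for j using nonneg that by (auto simp: a_def intro: sum_nonneg)
    have a_le: "a j \<le> L j" if j: "1 \<le> j" for j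
      unfolding a_eq L_def by (rule sum_le_suminf[OF trace[OF j]]) (use nonneg j in auto)
    have r01: "0 \<le> r j \<and> r j \<le> 1" if "j \<in> {1..d}" for j
    proof -
      have j1: "1 \<le> j" using that by simp
      show ?thesis using a_nn[OF j1] a_le[OF j1] L_pos(2)[OF j1] by (simp add: r_def)
    qed
    have sumF: "sum (fd d) F = (\<Prod>j\<in>{1..d}. a j)"
      unfolding F_def tensor_eig_def a_def by (rule prod_sum_PiE[symmetric]) auto
    have prodr: "(\<Prod>j\<in>{1..d}. a j) = (\<Prod>j\<in>{1..d}. r j) * (\<Prod>j\<in>{1..d}. L j)"
      unfolding prod.distrib[symmetric] proof (rule prod.cong)
        fix x assume "x \<in> {1..d}"
        then have "0 < L x" using L_pos(2)[of x] by simp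
        then show "a x = r x * L x" by (simp add: r_def)
      qed simp
    define g where "g j = (if j \<le> J then \<eta> else s j)" for j
    have rg: "1 - r j \<le> g j" if j: "j \<in> {1..d}" for j
    proof -
      have j1: "1 \<le> j" using j by simp
      have "1 - r j = (L j - a j) / L j" using L_pos[OF j1] by (simp add: r_def field_simps)
      also have "\<dots> \<le> (L j - a j) / lam j 1"
        using a_le[OF j1] L_pos[OF j1] pos[OF j1] by (intro divide_left_mono) auto
      also have "\<dots> \<le> g j"
      proof (cases "j \<le> J")
        case True
        then have "L j - a j < \<eta> * lam j 1" using K(1)[of j] j1 by (simp add: a_def Kj_def)
        then show ?thesis using True pos[OF j1] by (simp add: g_def divide_le_eq)
      next
        case False
        then have "a j = lam j 1" by (simp add: a_def Kj_def)
        then show ?thesis using False L_eq[OF j1] pos[OF j1] by (simp add: g_def field_simps)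
      qed
      finally show ?thesis .
    qed
    have tail: "(\<Sum>j\<in>{Suc J..d}. s j) \<le> suminf s' - (\<Sum>j<J. s' j)"
    proof (cases "J \<le> d")
      case False
      then have "{Suc J..d} = {}" by auto
      moreover have "(\<Sum>j<J. s' j) \<le> suminf s'" by (rule sum_le_suminf[OF S']) (use s'nn in auto)
      ultimately show ?thesis by simp
    next
      case True
      have "{1..d} = {1..J} \<union> {Suc J..d}" using True by auto
      then have "(\<Sum>j\<in>{1..d}. s j) = (\<Sum>j\<in>{1..J}. s j) + (\<Sum>j\<in>{Suc J..d}. s j)"
        by (simp add: sum.union_disjoint[symmetric] ivl_disj_int)
      moreover have "(\<Sum>j\<in>{1..n}. s j) = (\<Sum>j<n. s' j)" for n
        using sum.atLeast1_atMost_eq by (simp add: s'_def)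
      moreover have "(\<Sum>j<d. s' j) \<le> suminf s'" by (rule sum_le_suminf[OF S']) (use s'nn in auto)
      ultimately show ?thesis by simp
    qed
    have sumg: "(\<Sum>j\<in>{1..d}. g j) \<le> \<delta>"
    proof -
      have "(\<Sum>j\<in>{1..d}. g j) = (\<Sum>j\<in>{1..d} \<inter> {j. j \<le> J}. \<eta>) + (\<Sum>j\<in>{1..d} \<inter> - {j. j \<le> J}. s j)"
        unfolding g_def by (rule sum.If_cases) simp
      also have "{1..d} \<inter> - {j. j \<le> J} = {Suc J..d}" by auto
      also have "(\<Sum>j\<in>{1..d} \<inter> {j. j \<le> J}. \<eta>) \<le> J * \<eta>"
      proof -
        have "card ({1..d} \<inter> {j. j \<le> J}) \<le> card {1..J}" by (rule card_mono) auto
        then have "card ({1..d} \<inter> {j. j \<le> J}) \<le> J" by simp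
        then show ?thesis using etapos by (simp add: mult_right_mono)
      qed
      moreover have "J * \<eta> \<le> \<delta>/2" using dpos by (simp add: \<eta>_def field_simps)
      ultimately show ?thesis using tail J by linarith
    qed
    have "1 - \<delta> \<le> (\<Prod>j\<in>{1..d}. r j)"
    proof -
      have "(\<Sum>j\<in>{1..d}. 1 - r j) \<le> (\<Sum>j\<in>{1..d}. g j)" by (rule sum_mono) (rule rg)
      then have "1 - \<delta> \<le> 1 - (\<Sum>j\<in>{1..d}. 1 - r j)" using sumg by linarith
      also have "\<dots> \<le> (\<Prod>j\<in>{1..d}. r j)" by (rule prod_ge_one_minus) (use r01 in auto)
      finally show ?thesis .
    qed
    then have big: "(1 - eps\<^sup>2) * infsum (fd d) (Ix d) \<le> sum (fd d) F"
      unfolding sumF prodr fd_infsum \<delta>_def[symmetric]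
      by (rule mult_right_mono) (use Td_pos[of d] fd_infsum in simp)
    show "avg_complexity (fd d) (Ix d) eps \<le> K ^ J"
      by (rule avg_le[OF fd_nn fd_sm Td_pos finF FI cardF big])
  qed
qed

end


theorem proposition5:
  fixes lam :: "nat \<Rightarrow> nat \<Rightarrow> real"
  assumes nonneg: "\<And>j k. 1 \<le> j \<Longrightarrow> 1 \<le> k \<Longrightarrow> 0 \<le> lam j k"
    and noninc: "\<And>j k. 1 \<le> j \<Longrightarrow> 1 \<le> k \<Longrightarrow> lam j (Suc k) \<le> lam j k"
    and trace: "\<And>j. 1 \<le> j \<Longrightarrow> summable (\<lambda>k. lam j (Suc k))"
    and pos: "\<And>j. 1 \<le> j \<Longrightarrow> 0 < lam j 1"
  shows "(\<forall>eps::real. 0 < eps \<and> eps < 1 \<longrightarrow>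
            (\<exists>M::nat. \<forall>d\<ge>1. avg_complexity (tensor_eig lam d) (multi_idx d) eps \<le> M))
         \<longleftrightarrow> summable (\<lambda>j. \<Sum>k. lam (Suc j) (k + 2) / lam (Suc j) 1)"
proof -
  interpret lam_ctx lam by unfold_locales (use assms in auto)
  have e: "(\<lambda>j. \<Sum>k. lam (Suc j) (k + 2) / lam (Suc j) 1) = (\<lambda>j. s (Suc j))"
    using stmt_eq by presburger
  show ?thesis unfolding e using dir1 dir2 by blast
qed

end
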